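(* Let $c\ge 0$, $R>0$, $R\neq c$, and let $\mathcal{C}:x^2+y^2=R^2$. Let $\mathcal{D}$ be the ellipse $\frac{x^2}{(R^2+c^2)^2/(4R^2)}+\frac{y^2}{(R^2-c^2)^2/(4R^2)}=1$, which is centered at the origin with foci $(\pm c,0)$. Suppose some nondegenerate triangle inscribed in $\mathcal{C}$ is circumscribed about $\mathcal{D}$, and let $\mathcal{P}$ be the family of all such triangles. Then for every $\triangle ABC\in\mathcal{P}$, the three vertices of the tangential triangle of $\triangle ABC$ lie on the fixed ellipse $$\frac{x^2}{\frac{4R^6}{(R^2+c^2)^2}}+\frac{y^2}{\frac{4R^6}{(R^2-c^2)^2}}=1,$$ which is centered at the center of $\mathcal{D}$.
   Context: A triangle is circumscribed about a conic if each of its three sidelines is tangent to the conic. The tangential triangle of a non-right triangle $ABC$ is the triangle formed by the tangent lines to the circumcircle of $\triangle ABC$ at $A$, $B$, $C$. *)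

theory Defs
  imports "HOL-Analysis.Analysis"
begin

definition on_circle :: "real \<Rightarrow> real \<times> real \<Rightarrow> bool" where
  "on_circle R P \<longleftrightarrow> (fst P)^2 + (snd P)^2 = R^2"

definition on_ellipse :: "real \<Rightarrow> real \<Rightarrow> real \<times> real \<Rightarrow> bool" where
  "on_ellipse a2 b2 P \<longleftrightarrow> (fst P)^2 / a2 + (snd P)^2 / b2 = 1"

text \<open>The line through the distinct points P, Q is tangent to the ellipse:
  it passes through a point T of the ellipse and its direction is orthogonal
  to the gradient of the ellipse equation at T.\<close>
definition line_tangent_ellipse :: "real \<Rightarrow> real \<Rightarrow> real \<times> real \<Rightarrow> real \<times> real \<Rightarrow> bool" where
  "line_tangent_ellipse a2 b2 P Q \<longleftrightarrow> P \<noteq> Q \<and>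
     (\<exists>T. on_ellipse a2 b2 T \<and> collinear {P, Q, T} \<and>
          fst T * (fst Q - fst P) / a2 + snd T * (snd Q - snd P) / b2 = 0)"

definition circumscribed_about_ellipse ::
  "real \<Rightarrow> real \<Rightarrow> real \<times> real \<Rightarrow> real \<times> real \<Rightarrow> real \<times> real \<Rightarrow> bool" where
  "circumscribed_about_ellipse a2 b2 A B C \<longleftrightarrow>
     line_tangent_ellipse a2 b2 A B \<and> line_tangent_ellipse a2 b2 B C \<and>
     line_tangent_ellipse a2 b2 C A"

definition inscribed_triangle :: "real \<Rightarrow> real \<times> real \<Rightarrow> real \<times> real \<Rightarrow> real \<times> real \<Rightarrow> bool" where
  "inscribed_triangle R A B C \<longleftrightarrow>
     \<not> collinear {A, B, C} \<and> on_circle R A \<and> on_circle R B \<and> on_circle R C"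

definition on_circle_tangent :: "real \<times> real \<Rightarrow> real \<times> real \<Rightarrow> bool" where
  "on_circle_tangent A X \<longleftrightarrow> (fst X - fst A) * fst A + (snd X - snd A) * snd A = 0"

definition tangential_vertex :: "real \<times> real \<Rightarrow> real \<times> real \<Rightarrow> real \<times> real \<Rightarrow> bool" where
  "tangential_vertex B C X \<longleftrightarrow> on_circle_tangent B X \<and> on_circle_tangent C X"

end

theory Submission
  imports Defs
begin

lemma key:
  fixes a2 b2 R :: real and B C X :: "real \<times> real"
  assumes a2: "a2 > 0" and b2: "b2 > 0" and R: "R > 0"
    and cB: "on_circle R B" and cC: "on_circle R C"
    and tg: "line_tangent_ellipse a2 b2 B C" and tv: "tangential_vertex B C X"
  shows "a2 * (fst X)^2 + b2 * (snd X)^2 = R^4"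
proof -
  obtain b1 b2' where B: "B = (b1, b2')" by (cases B)
  obtain c1 c2 where C: "C = (c1, c2)" by (cases C)
  obtain x1 x2 where X: "X = (x1, x2)" by (cases X)
  from tg obtain T where ne: "B \<noteq> C" and eT: "on_ellipse a2 b2 T" and col: "collinear {B, C, T}"
    and orth: "fst T * (fst C - fst B) / a2 + snd T * (snd C - snd B) / b2 = 0"
    unfolding line_tangent_ellipse_def by blast
  obtain t1 t2 where T: "T = (t1, t2)" by (cases T)
  have "collinear {B, T, C}" using col by (simp add: insert_commute)
  then obtain u where Tu: "T = u *\<^sub>R B + (1 - u) *\<^sub>R C" using ne collinear_3_expand by blast
  have hB: "b1^2 + b2'^2 = R^2" using cB B by (simp add: on_circle_def)
  have hC: "c1^2 + c2^2 = R^2" using cC C by (simp add: on_circle_def)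
  have xB: "(x1 - b1) * b1 + (x2 - b2') * b2' = 0"
    using tv B X by (simp add: tangential_vertex_def on_circle_tangent_def)
  have xC: "(x1 - c1) * c1 + (x2 - c2) * c2 = 0"
    using tv C X by (simp add: tangential_vertex_def on_circle_tangent_def)
  have t1: "t1 = u * b1 + (1 - u) * c1" and t2: "t2 = u * b2' + (1 - u) * c2"
    using Tu T B C by auto
  have XB: "x1 * b1 + x2 * b2' = R^2" using xB hB by (simp add: algebra_simps power2_eq_square)
  have XC: "x1 * c1 + x2 * c2 = R^2" using xC hC by (simp add: algebra_simps power2_eq_square)
  have XT: "x1 * t1 + x2 * t2 = R^2"
  proof -
    have "x1 * t1 + x2 * t2 = u * (x1 * b1 + x2 * b2') + (1 - u) * (x1 * c1 + x2 * c2)"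
      unfolding t1 t2 by (simp add: algebra_simps)
    also have "\<dots> = R^2" using XB XC by (simp add: algebra_simps)
    finally show ?thesis .
  qed
  define g1 where "g1 = t1 / a2"
  define g2 where "g2 = t2 / b2"
  have ell: "t1 * g1 + t2 * g2 = 1" using eT T unfolding on_ellipse_def g1_def g2_def
    by (simp add: power2_eq_square)
  have og: "g1 * (c1 - b1) + g2 * (c2 - b2') = 0" using orth T B C g1_def g2_def by simp
  have ox: "x1 * (c1 - b1) + x2 * (c2 - b2') = 0" using XB XC by (simp add: algebra_simps)
  have cross: "g1 * x2 = g2 * x1"
  proof -
    have ne2: "c1 - b1 \<noteq> 0 \<or> c2 - b2' \<noteq> 0" using ne B C by auto
    have "(g1 * x2 - g2 * x1) * (c1 - b1) = 0"
      using og ox by (smt (verit, ccfv_SIG) mult.commute mult.left_commute right_diff_distrib' mult_minus_left)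
    moreover have "(g1 * x2 - g2 * x1) * (c2 - b2') = 0"
      using og ox by (smt (verit, ccfv_SIG) mult.commute mult.left_commute right_diff_distrib' mult_minus_left)
    ultimately show ?thesis using ne2 by auto
  qed
  have Xne: "x1 \<noteq> 0 \<or> x2 \<noteq> 0" using XB R by auto
  obtain k where gk: "g1 = k * x1" "g2 = k * x2"
  proof (cases "x1 = 0")
    case True
    then have "x2 \<noteq> 0" using Xne by auto
    then show ?thesis using that[of "g2 / x2"] cross True by (auto simp: field_simps)
  next
    case False
    then show ?thesis using that[of "g1 / x1"] cross by (auto simp: field_simps)
  qed
  have tt1: "t1 = k * a2 * x1" using gk g1_def a2 by (simp add: field_simps)
  have tt2: "t2 = k * b2 * x2" using gk g2_def b2 by (simp add: field_simps)
  define S where "S = a2 * x1^2 + b2 * x2^2"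
  have e1: "k^2 * S = 1" using ell unfolding tt1 tt2 gk S_def by (simp add: algebra_simps power2_eq_square)
  have e2: "k * S = R^2" using XT unfolding tt1 tt2 S_def by (simp add: algebra_simps power2_eq_square)
  have "k * R^2 = 1" using e1 e2 by (metis mult.assoc power2_eq_square)
  then have "S = k * S * R^2" by simp
  then have "S = R^4" using e2 by (simp add: power4_eq_xxxx power2_eq_square)
  then show ?thesis using X S_def by simp
qed

theorem theorem5p10:
  fixes c R :: real
  assumes "c \<ge> 0" and "R > 0" and "R \<noteq> c"
    and "\<exists>A0 B0 C0. inscribed_triangle R A0 B0 C0 \<and>
           circumscribed_about_ellipse ((R^2 + c^2)^2 / (4 * R^2)) ((R^2 - c^2)^2 / (4 * R^2)) A0 B0 C0"
  shows "\<forall>A B C. inscribed_triangle R A B C \<and>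
           circumscribed_about_ellipse ((R^2 + c^2)^2 / (4 * R^2)) ((R^2 - c^2)^2 / (4 * R^2)) A B C
         \<longrightarrow> (\<forall>X. (tangential_vertex B C X \<or> tangential_vertex C A X \<or> tangential_vertex A B X)
                 \<longrightarrow> on_ellipse (4 * R^6 / (R^2 + c^2)^2) (4 * R^6 / (R^2 - c^2)^2) X)"
proof (intro allI impI)
  fix A B C X
  assume h: "inscribed_triangle R A B C \<and>
           circumscribed_about_ellipse ((R^2 + c^2)^2 / (4 * R^2)) ((R^2 - c^2)^2 / (4 * R^2)) A B C"
    and hx: "tangential_vertex B C X \<or> tangential_vertex C A X \<or> tangential_vertex A B X"
  define a2 where "a2 = (R^2 + c^2)^2 / (4 * R^2)"
  define b2 where "b2 = (R^2 - c^2)^2 / (4 * R^2)"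
  have Rp: "R > 0" using assms by simp
  have a2p: "a2 > 0" unfolding a2_def using Rp by (simp add: add_pos_nonneg)
  have "R^2 \<noteq> c^2" using assms by (metis power2_eq_iff_nonneg less_imp_le)
  then have b2p: "b2 > 0" unfolding b2_def using Rp by simp
  have S: "a2 * (fst X)^2 + b2 * (snd X)^2 = R^4"
    using hx h key[OF a2p b2p Rp] unfolding inscribed_triangle_def circumscribed_about_ellipse_def
      a2_def b2_def by metis
  have "R^4 / a2 = 4 * R^6 / (R^2 + c^2)^2" unfolding a2_def using Rp
    by (simp add: field_simps power2_eq_square power4_eq_xxxx eval_nat_numeral)
  moreover have "R^4 / b2 = 4 * R^6 / (R^2 - c^2)^2" unfolding b2_def using Rp
    by (simp add: field_simps power2_eq_square power4_eq_xxxx eval_nat_numeral)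
  moreover have "(fst X)^2 / (R^4 / a2) + (snd X)^2 / (R^4 / b2) = 1"
    using S Rp a2p b2p by (simp add: field_simps)
  ultimately show "on_ellipse (4 * R^6 / (R^2 + c^2)^2) (4 * R^6 / (R^2 - c^2)^2) X"
    unfolding on_ellipse_def by simp
qed

end
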